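(* For an integer $n\ge1$, let $\mathcal{G}^{\mathrm{tree}}_{n,1}$ be the directed tree with unit edge weights consisting of a root node and two branches: a directed path of $n$ edges from a leaf $k$ to the root and a single edge from a leaf $j$ to the root (so it has $n+2$ nodes). Then the effective resistance between its two leaves is $$r(n,1)=2(n-1)+2^{2-n}.$$
   Context: For a directed graph with nonnegative adjacency matrix $A=[a_{i,j}]$ ($a_{i,j}>0$ iff there is an edge from $i$ to $j$), let $D$ be the diagonal matrix of out-degrees $d_k=\sum_j a_{k,j}$ and $L=D-A$. For a connected graph (one with a node reachable from every node) on $N$ nodes, let $\Pi=I_N-\frac1N\mathbf{1}_N\mathbf{1}_N^T$, $Q\in\mathbb{R}^{(N-1)\times N}$ with $Q\mathbf{1}_N=0$, $QQ^T=I_{N-1}$, $Q^TQ=\Pi$; $\overline L=QLQ^T$; $\Sigma$ the unique solution of $\overline L\Sigma+\Sigma\overline L^T=I_{N-1}$; $X=2Q^T\Sigma Q$; and the effective resistance $r_{k,j}=x_{k,k}+x_{j,j}-2x_{k,j}$. More generally, for integers $n,m\ge1$, $\mathcal{G}^{\mathrm{tree}}_{n,m}$ denotes the unit-weight directed tree with $n+m+1$ nodes formed by a directed path of $n$ edges from one leaf to a root and a directed path of $m$ edges from another leaf to the same root, and $r(n,m)$ denotes the effective resistance between its two leaves. *)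

theory Defs
  imports "Jordan_Normal_Form.Matrix"
begin

definition out_degree :: "real mat \<Rightarrow> nat \<Rightarrow> real" where
  "out_degree A k = (\<Sum>j<dim_col A. A $$ (k, j))"

definition laplacian :: "real mat \<Rightarrow> real mat" where
  "laplacian A = mat (dim_row A) (dim_col A)
     (\<lambda>(i, j). (if i = j then out_degree A i else 0) - A $$ (i, j))"

definition is_Q_matrix :: "nat \<Rightarrow> real mat \<Rightarrow> bool" where
  "is_Q_matrix N Q \<longleftrightarrow> Q \<in> carrier_mat (N - 1) N
     \<and> Q *\<^sub>v (vec N (\<lambda>_. 1)) = 0\<^sub>v (N - 1)
     \<and> Q * Q\<^sup>T = 1\<^sub>m (N - 1)
     \<and> Q\<^sup>T * Q = 1\<^sub>m N - (1 / real N) \<cdot>\<^sub>m mat N N (\<lambda>_. 1)"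

definition eff_resistance :: "real mat \<Rightarrow> nat \<Rightarrow> nat \<Rightarrow> real" where
  "eff_resistance A k j =
    (let N = dim_row A;
         L = laplacian A;
         Q = (SOME Q. is_Q_matrix N Q);
         Lb = Q * L * Q\<^sup>T;
         S = (THE S. S \<in> carrier_mat (N - 1) (N - 1) \<and> Lb * S + S * Lb\<^sup>T = 1\<^sub>m (N - 1));
         X = 2 \<cdot>\<^sub>m (Q\<^sup>T * S * Q)
     in X $$ (k, k) + X $$ (j, j) - 2 * X $$ (k, j))"

text \<open>The tree G^tree_{n,m} on nodes 0..n+m: path 0 -> 1 -> ... -> n (root n, leaf 0) and
  path n+1 -> n+2 -> ... -> n+m -> n (leaf n+1); unit weights.\<close>
definition tree_edge :: "nat \<Rightarrow> nat \<Rightarrow> nat \<Rightarrow> nat \<Rightarrow> bool" where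
  "tree_edge n m i j \<longleftrightarrow>
     (i < n \<and> j = i + 1) \<or> (n + 1 \<le> i \<and> i < n + m \<and> j = i + 1) \<or> (i = n + m \<and> j = n)"

definition tree_adj :: "nat \<Rightarrow> nat \<Rightarrow> real mat" where
  "tree_adj n m = mat (n + m + 1) (n + m + 1) (\<lambda>(i, j). if tree_edge n m i j then 1 else 0)"

definition r_tree :: "nat \<Rightarrow> nat \<Rightarrow> real" where
  "r_tree n m = eff_resistance (tree_adj n m) 0 (n + 1)"

end

theory Submission
  imports Defs
begin


fun ww :: "nat \<Rightarrow> nat \<Rightarrow> real" where
  "ww 0 0 = 1/2"
| "ww (Suc a) 0 = ww a 0 / 2"
| "ww 0 (Suc b) = ww 0 b / 2"
| "ww (Suc a) (Suc b) = (ww a (Suc b) + ww (Suc a) b) / 2"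

lemma ww_sym: "ww a b = ww b a"
  by (induction a b rule: ww.induct) auto

lemma ww_0n: "ww 0 n = 1 / 2 ^ (Suc n)"
  by (induction n) auto

lemma ww_diag: "ww (Suc n) (Suc n) = ww (Suc n) n"
  using ww_sym[of n "Suc n"] by simp

lemma ww_col: "(\<Sum>a<Suc n. ww a n) = 1/2"
proof (induction n)
  case 0 then show ?case by simp
next
  case (Suc n)
  let ?T = "\<Sum>a<Suc (Suc n). ww a (Suc n)"
  have h1: "2 * ?T = (\<Sum>a<Suc (Suc n). 2 * ww a (Suc n))" by (simp add: sum_distrib_left)
  have h2: "(\<Sum>a<Suc (Suc n). 2 * ww a (Suc n)) = 2 * ww 0 (Suc n) + (\<Sum>a<Suc n. 2 * ww (Suc a) (Suc n))"
    by (subst sum.lessThan_Suc_shift) simp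
  have e: "\<And>a. 2 * ww (Suc a) (Suc n) = ww a (Suc n) + ww (Suc a) n" by simp
  have h3: "(\<Sum>a<Suc n. 2 * ww (Suc a) (Suc n)) = (\<Sum>a<Suc n. ww a (Suc n)) + (\<Sum>a<Suc n. ww (Suc a) n)"
    by (simp only: e sum.distrib)
  have h4: "(\<Sum>a<Suc n. ww a (Suc n)) = ?T - ww (Suc n) (Suc n)" by simp
  have h5: "ww 0 n + (\<Sum>a<Suc n. ww (Suc a) n) = (\<Sum>a<Suc (Suc n). ww a n)"
    by (subst (2) sum.lessThan_Suc_shift) simp
  have h6: "(\<Sum>a<Suc (Suc n). ww a n) = 1/2 + ww (Suc n) n" using Suc by simp
  have h7: "2 * ww 0 (Suc n) = ww 0 n" by simp
  show ?case using h1 h2 h3 h4 h5 h6 h7 ww_diag[of n] by linarith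
qed

definition GG :: "nat \<Rightarrow> nat \<Rightarrow> real" where
  "GG a b = (if a = b then 1 else 0) + (if a \<noteq> 0 \<and> b \<noteq> 0 then 1 else 0) + (if a = 0 \<and> b = 0 then 1 else 0)"

definition FF :: "nat \<Rightarrow> real" where
  "FF n = (\<Sum>a<n. \<Sum>b<n. ww a b * GG a b)"

lemma sum_nz: "(\<Sum>a<n. (if 0 < a then h a else 0)) = (\<Sum>a<n. h a) - (if n = 0 then 0 else h 0)"
  for h :: "nat \<Rightarrow> real"
proof -
  have "(\<Sum>a<n. h a) = (\<Sum>a<n. (if 0 < a then h a else 0)) + (\<Sum>a<n. if a = 0 then h a else 0)"
    by (subst sum.distrib[symmetric]) (rule sum.cong, auto)
  moreover have "(\<Sum>a<n. if a = 0 then h a else 0) = (if n = 0 then 0 else h 0)"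
    by (cases n) (auto simp: sum.delta')
  ultimately show ?thesis by simp
qed

lemma FF_Suc: "n \<ge> 1 \<Longrightarrow> FF (Suc n) = FF n + 1 - 1 / 2 ^ n"
proof -
  assume n: "n \<ge> 1"
  have "FF (Suc n) = FF n + (\<Sum>a<n. ww a n * GG a n) + (\<Sum>b<n. ww n b * GG n b) + ww n n * GG n n"
    unfolding FF_def by (simp add: sum.distrib algebra_simps)
  also have "(\<Sum>a<n. ww a n * GG a n) = (\<Sum>a<n. if a \<noteq> 0 then ww a n else 0)"
    using n by (intro sum.cong) (auto simp: GG_def)
  also have "(\<Sum>b<n. ww n b * GG n b) = (\<Sum>a<n. if a \<noteq> 0 then ww a n else 0)"
    using n by (intro sum.cong) (auto simp: GG_def ww_sym)
  also have "GG n n = 2" using n by (simp add: GG_def)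
  also have "(\<Sum>a<n. if a \<noteq> 0 then ww a n else 0) = (\<Sum>a<n. ww a n) - ww 0 n"
    using n by (simp add: sum_nz)
  also have "(\<Sum>a<n. ww a n) = 1/2 - ww n n" using ww_col[of n] by simp
  finally have "FF (Suc n) = FF n + 1 - 2 * ww 0 n" by simp
  then show ?thesis by (simp add: ww_0n)
qed

lemma FF_val: "n \<ge> 1 \<Longrightarrow> FF n = real n - 1 + 2 / 2 ^ n"
proof (induction n rule: dec_induct)
  case base then show ?case by (simp add: FF_def GG_def)
next
  case (step m) then show ?case by (simp add: FF_Suc)
qed



lemma mult_entry: "i < dim_row A \<Longrightarrow> j < dim_col B \<Longrightarrow> dim_col A = dim_row B \<Longrightarrow>
   (A * B) $$ (i, j) = (\<Sum>k<dim_row B. A $$ (i, k) * B $$ (k, j))"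
  by (simp add: index_mult_mat scalar_prod_def atLeast0LessThan)

lemma alg1: fixes k s m :: real assumes B: "k*(1-s) = s" and A: "m*s^2 = 1 - s^2"
  shows "s + m*(s*(-(k*s))) = - (s^2)"
proof -
  have "m*(s*(-(k*s))) = -k*(m*s^2)" by (simp add: power2_eq_square algebra_simps)
  also have "\<dots> = -(k*(1-s))*(1+s)" by (simp only: A) (simp add: power2_eq_square algebra_simps)
  also have "\<dots> = -s*(1+s)" using B by simp
  finally show ?thesis by (simp add: power2_eq_square algebra_simps)
qed
lemma alg2: fixes k s m :: real assumes B: "k*(1-s) = s" and A: "m*s^2 = 1 - s^2"
  shows "-(k*s) - (k*s) + m*((k*s)*(k*s)) = - (s^2)"
proof -
  have "m*((k*s)*(k*s)) = k*k*(m*s^2)" by (simp add: power2_eq_square algebra_simps)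
  also have "\<dots> = k*(k*(1-s))*(1+s)" by (simp only: A) (simp add: power2_eq_square algebra_simps)
  also have "\<dots> = k*s*(1+s)" using B by simp
  finally have "m*((k*s)*(k*s)) = k*s*(1+s)" .
  moreover have "k*s*s = k*s - s*s"
  proof -
    have "k*s*s = k*s - (k*(1-s))*s" by (simp add: algebra_simps)
    then show ?thesis using B by simp
  qed
  ultimately show ?thesis by (simp add: power2_eq_square algebra_simps)
qed

definition HQ :: "nat \<Rightarrow> real mat" where
  "HQ N = mat (N - 1) N (\<lambda>(i, j). (if j = Suc i then 1 else 0)
      + (1 / (1 - 1 / sqrt (real N))) * (1 / sqrt (real N)) * ((if j = 0 then 1 else 0) - 1 / sqrt (real N)))"

lemma HQ_is_Q:
  assumes N: "N \<ge> 2"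
  shows "is_Q_matrix N (HQ N)"
proof -
  define s where "s = 1 / sqrt (real N)"
  define c where "c = 1 / (1 - s)"
  define k where "k = c * s"
  define wv where "wv = (\<lambda>j::nat. (if j = 0 then 1 else 0) - s)"
  have Q: "HQ N = mat (N - 1) N (\<lambda>(i, j). (if j = Suc i then 1 else 0) + k * wv j)"
    unfolding HQ_def k_def c_def s_def wv_def by simp
  have sqN: "sqrt (real N) > 1" using N by simp
  have s0: "s > 0" and s1: "s < 1" using sqN by (auto simp: s_def)
  have Ns: "real N * s^2 = 1" using N by (simp add: s_def power_divide)
  have c1: "c * (1 - s) = 1" using s1 by (simp add: c_def)
  have sw: "(\<Sum>j<N. wv j) = 1 - real N * s"
    using N by (simp add: wv_def sum.distrib sum_subtractf)
  have sw2: "(\<Sum>j<N. wv j * wv j) = 2 - 2 * s"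
  proof -
    have "(\<Sum>j<N. wv j * wv j) = (\<Sum>j<N. (if j = 0 then 1 - 2 * s else 0) + s^2)"
      by (intro sum.cong) (auto simp: wv_def power2_eq_square algebra_simps)
    also have "\<dots> = 1 - 2 * s + real N * s^2" using N by (simp add: sum.distrib)
    finally show ?thesis using Ns by simp
  qed
  have ks: "k * (1 - real N * s) = -1"
  proof -
    have "real N * s = 1 / s" using Ns s0 by (simp add: power2_eq_square field_simps)
    then show ?thesis using s0 s1 unfolding k_def c_def by (simp add: field_simps)
  qed
  have k1: "k * (1 - s) = s"
  proof -
    have "k * (1 - s) = s * (c * (1 - s))" unfolding k_def by (simp add: algebra_simps)
    then show ?thesis using c1 by simp
  qed
  have kk: "k * k * (2 - 2 * s) = 2 * k * s"
  proof -
    have "k * k * (2 - 2 * s) = 2 * k * (k * (1 - s))" by (simp add: algebra_simps)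
    then show ?thesis using k1 by simp
  qed
  have carr: "HQ N \<in> carrier_mat (N - 1) N" unfolding Q by simp
  have d1: "(\<Sum>j<N. (if j = Suc i then 1 else 0) * (f j::real)) = f (Suc i)" if "i < N - 1" for i f
  proof -
    have "(\<Sum>j<N. (if j = Suc i then 1 else 0) * (f j::real)) = (\<Sum>j<N. if Suc i = j then f j else 0)"
      by (rule sum.cong) auto
    then show ?thesis using that by (simp add: sum.delta)
  qed
  show ?thesis
    unfolding is_Q_matrix_def
  proof (intro conjI)
    show "HQ N \<in> carrier_mat (N - 1) N" by fact
    show "HQ N *\<^sub>v vec N (\<lambda>_. 1) = 0\<^sub>v (N - 1)"
    proof (rule eq_vecI)
      fix i assume "i < dim_vec (0\<^sub>v (N - 1) :: real vec)"
      then have i: "i < N - 1" by simp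
      have "(HQ N *\<^sub>v vec N (\<lambda>_. 1)) $ i = (\<Sum>j<N. (if j = Suc i then 1 else 0) + k * wv j)"
        using i unfolding Q by (simp add: mult_mat_vec_def scalar_prod_def atLeast0LessThan)
      also have "\<dots> = 1 + k * (1 - real N * s)"
        using i by (simp add: sum.distrib sum_distrib_left[symmetric] sw)
      finally show "(HQ N *\<^sub>v vec N (\<lambda>_. 1)) $ i = 0\<^sub>v (N - 1) $ i" using ks i by simp
    qed (simp add: Q)
    show "HQ N * (HQ N)\<^sup>T = 1\<^sub>m (N - 1)"
    proof (rule eq_matI)
      fix i i' assume "i < dim_row (1\<^sub>m (N - 1) :: real mat)" "i' < dim_col (1\<^sub>m (N - 1) :: real mat)"
      then have i: "i < N - 1" and i': "i' < N - 1" by auto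
      have "(HQ N * (HQ N)\<^sup>T) $$ (i, i') = (\<Sum>j<N. ((if j = Suc i then 1 else 0) + k * wv j) * ((if j = Suc i' then 1 else 0) + k * wv j))"
        using i i' unfolding Q by (subst mult_entry) auto
      also have "\<dots> = (\<Sum>j<N. (if j = Suc i then 1 else 0) * ((if j = Suc i' then 1 else 0) + k * wv j))
           + k * (\<Sum>j<N. (if j = Suc i' then 1 else 0) * wv j) + k * k * (\<Sum>j<N. wv j * wv j)"
        by (simp add: sum.distrib sum_distrib_left algebra_simps)
      also have "\<dots> = (if i = i' then 1 else 0) + k * wv (Suc i) + k * wv (Suc i') + k * k * (2 - 2 * s)"
        using i i' by (simp add: d1 sw2)
      also have "\<dots> = (if i = i' then 1 else 0)" 
      proof -
        have "k * wv (Suc i) + k * wv (Suc i') = -2*k*s" by (simp add: wv_def)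
        then show ?thesis using kk by linarith
      qed
      finally show "(HQ N * (HQ N)\<^sup>T) $$ (i, i') = 1\<^sub>m (N - 1) $$ (i, i')" using i i' by simp
    qed (simp_all add: Q)
    show "(HQ N)\<^sup>T * HQ N = 1\<^sub>m N - (1 / real N) \<cdot>\<^sub>m mat N N (\<lambda>_. 1)"
    proof (rule eq_matI)
      fix j j' assume "j < dim_row (1\<^sub>m N - (1 / real N) \<cdot>\<^sub>m mat N N (\<lambda>_. 1) :: real mat)"
        "j' < dim_col (1\<^sub>m N - (1 / real N) \<cdot>\<^sub>m mat N N (\<lambda>_. 1) :: real mat)"
      then have j: "j < N" and j': "j' < N" by auto
      have "((HQ N)\<^sup>T * HQ N) $$ (j, j') = (\<Sum>i<N - 1. ((if j = Suc i then 1 else 0) + k * wv j) * ((if j' = Suc i then 1 else 0) + k * wv j'))"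
        using j j' unfolding Q by (subst mult_entry) auto
      also have "\<dots> = (\<Sum>i<N - 1. (if j = Suc i then 1 else 0) * (if j' = Suc i then 1 else 0))
          + k * wv j' * (\<Sum>i<N - 1. (if j = Suc i then 1 else 0))
          + k * wv j * (\<Sum>i<N - 1. (if j' = Suc i then 1 else 0)) + real (N - 1) * (k * wv j * (k * wv j'))"
        by (simp add: sum.distrib sum_distrib_left algebra_simps)
      also have "\<dots> = (if j = j' \<and> j \<noteq> 0 then 1 else 0) + k * wv j' * (if j \<noteq> 0 then 1 else 0)
          + k * wv j * (if j' \<noteq> 0 then 1 else 0) + real (N - 1) * (k * wv j * (k * wv j'))"
      proof -
        have e: "(\<Sum>i<N - 1. (if j = Suc i then 1 else 0 :: real)) = (if j \<noteq> 0 then 1 else 0)" if "j < N" for j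
          using that by (cases j) (auto simp: sum.delta)
        show ?thesis using e[OF j] e[OF j'] j j'
          by (simp add: if_distrib[of "\<lambda>x. x * _"] sum.delta cong: if_cong) (cases j; auto simp: sum.delta)
      qed
      also have "\<dots> = (if j = j' then 1 else 0) - s^2"
      proof -
        have A: "real (N - 1) * s^2 = 1 - s^2" using Ns N by (simp add: of_nat_diff algebra_simps)
        have kw0: "k * wv 0 = s" using k1 by (simp add: wv_def)
        have kwn: "k * wv x = - (k * s)" if "x \<noteq> 0" for x using that by (simp add: wv_def)
        show ?thesis
        proof (cases "j = 0"; cases "j' = 0")
          assume "j = 0" "j' = 0"
          then show ?thesis using A kw0 by (simp add: power2_eq_square)
        next
          assume "j = 0" "j' \<noteq> 0"
          then show ?thesis using alg1[OF k1 A] kw0 kwn[of j'] by (simp add: algebra_simps)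
        next
          assume "j \<noteq> 0" "j' = 0"
          then show ?thesis using alg1[OF k1 A] kw0 kwn[of j] by (simp add: algebra_simps)
        next
          assume "j \<noteq> 0" "j' \<noteq> 0"
          then show ?thesis using alg2[OF k1 A] kwn[of j] kwn[of j'] by (simp add: algebra_simps)
        qed
      qed
      finally have fin: "((HQ N)\<^sup>T * HQ N) $$ (j, j') = (if j = j' then 1 else 0) - s^2" .
      show "((HQ N)\<^sup>T * HQ N) $$ (j, j') = (1\<^sub>m N - (1 / real N) \<cdot>\<^sub>m mat N N (\<lambda>_. 1)) $$ (j, j')"
      proof -
        have "s^2 = 1 / real N" using Ns N by (simp add: field_simps)
        then show ?thesis using j j' fin by simp
      qed
    qed (simp_all add: Q)
  qed
qed



lemma shift_sum: fixes \<phi> :: "nat \<Rightarrow> real"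
  assumes "\<phi> 0 = 0" "\<phi> n = 0"
  shows "(\<Sum>a<n. \<phi> (Suc a)) = (\<Sum>a<n. \<phi> a)"
proof -
  have "(\<Sum>a<Suc n. \<phi> a) = \<phi> 0 + (\<Sum>a<n. \<phi> (Suc a))" by (rule sum.lessThan_Suc_shift)
  moreover have "(\<Sum>a<Suc n. \<phi> a) = (\<Sum>a<n. \<phi> a) + \<phi> n" by simp
  ultimately show ?thesis using assms by simp
qed

lemma ww_pascal: "2 * ww a b - (if a = 0 then 0 else ww (a - 1) b) - (if b = 0 then 0 else ww a (b - 1))
   = (if a = 0 \<and> b = 0 then 1 else 0)"
  by (cases a; cases b) (auto simp: field_simps)

lemma pascal_sum:
  fixes h :: "nat \<Rightarrow> nat \<Rightarrow> real"
  assumes hA: "\<And>b. h n b = 0" and hB: "\<And>a. h a n = 0"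
  shows "2 * (\<Sum>a<n. \<Sum>b<n. ww a b * h a b) - (\<Sum>a<n. \<Sum>b<n. ww a b * h (Suc a) b)
     - (\<Sum>a<n. \<Sum>b<n. ww a b * h a (Suc b)) = h 0 0"
proof -
  define wa where "wa a b = (if a = 0 then 0 else ww (a - 1) b)" for a b
  define wb where "wb a b = (if b = 0 then 0 else ww a (b - 1))" for a b
  have s1: "(\<Sum>a<n. \<Sum>b<n. ww a b * h (Suc a) b) = (\<Sum>a<n. \<Sum>b<n. wa a b * h a b)"
    using shift_sum[of "\<lambda>a. \<Sum>b<n. wa a b * h a b" n] hA by (simp add: wa_def)
  have s2: "(\<Sum>b<n. ww a b * h a (Suc b)) = (\<Sum>b<n. wb a b * h a b)" for a
    using shift_sum[of "\<lambda>b. wb a b * h a b" n] hB by (simp add: wb_def)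
  have "2 * (\<Sum>a<n. \<Sum>b<n. ww a b * h a b) - (\<Sum>a<n. \<Sum>b<n. wa a b * h a b)
     - (\<Sum>a<n. \<Sum>b<n. wb a b * h a b) = (\<Sum>a<n. \<Sum>b<n. (2 * ww a b - wa a b - wb a b) * h a b)"
    by (simp add: sum_distrib_left sum_subtractf[symmetric] algebra_simps)
  also have "\<dots> = (\<Sum>a<n. \<Sum>b<n. (if a = 0 \<and> b = 0 then h a b else 0))"
    by (intro sum.cong refl) (simp add: wa_def wb_def ww_pascal[unfolded])
  also have "\<dots> = h 0 0"
  proof (cases n)
    case 0 then show ?thesis using hA[of 0] by simp
  next
    case (Suc m)
    have "(\<Sum>a<n. \<Sum>b<n. (if a = 0 \<and> b = 0 then h a b else 0)) = (\<Sum>a<n. if a = 0 then h 0 0 else 0)"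
      by (intro sum.cong refl) (auto simp: Suc)
    then show ?thesis by (simp add: Suc)
  qed
  finally show ?thesis using s1 s2 by simp
qed



definition fnx :: "nat \<Rightarrow> nat \<Rightarrow> nat" where "fnx n i = (if i < n then Suc i else n)"
definition Pm :: "nat \<Rightarrow> (nat \<Rightarrow> nat) \<Rightarrow> real mat" where
  "Pm N \<phi> = mat N N (\<lambda>(i, j). if j = \<phi> i then 1 else 0)"
definition gg :: "nat \<Rightarrow> nat \<Rightarrow> nat \<Rightarrow> real" where
  "gg n x y = (if x = y then 1 else 0) - (if x = n then 1 else 0) - (if y = n then 1 else 0) + 1"
definition Zm :: "nat \<Rightarrow> real mat" where
  "Zm n = mat (Suc (Suc n)) (Suc (Suc n)) (\<lambda>(i, k). \<Sum>a<n. \<Sum>b<n. ww a b * gg n ((fnx n ^^ a) i) ((fnx n ^^ b) k))"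
definition RRm :: "nat \<Rightarrow> real mat" where
  "RRm n = mat (Suc (Suc n)) (Suc (Suc n)) (\<lambda>(i, k). gg n i k)"

lemma funpow_fnx: "i < Suc (Suc n) \<Longrightarrow> (fnx n ^^ a) i = (if a = 0 then i else min (i + a) n)"
  by (induction a) (auto simp: fnx_def)

lemma fnx_lt: "i < Suc (Suc n) \<Longrightarrow> (fnx n ^^ a) i < Suc (Suc n)"
  by (simp add: funpow_fnx min_def)

lemma fnx_big: "i < Suc (Suc n) \<Longrightarrow> n \<le> a \<Longrightarrow> 0 < a \<Longrightarrow> (fnx n ^^ a) i = n"
  by (simp add: funpow_fnx)

lemma gg_n: "gg n n y = 0" "gg n x n = 0" by (auto simp: gg_def)

lemma Pm_mult: "(\<And>i. i < N \<Longrightarrow> \<phi> i < N) \<Longrightarrow> B \<in> carrier_mat N k \<Longrightarrow>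
   Pm N \<phi> * B = mat N k (\<lambda>(i, j). B $$ (\<phi> i, j))"
proof -
  assume ph: "\<And>i. i < N \<Longrightarrow> \<phi> i < N" and B: "B \<in> carrier_mat N k"
  show ?thesis
  proof (rule eq_matI)
    fix i j assume "i < dim_row (mat N k (\<lambda>(i, j). B $$ (\<phi> i, j)))" "j < dim_col (mat N k (\<lambda>(i, j). B $$ (\<phi> i, j)))"
    then have i: "i < N" and j: "j < k" by auto
    have "(Pm N \<phi> * B) $$ (i, j) = (\<Sum>l<N. (if l = \<phi> i then 1 else 0) * B $$ (l, j))"
      using i j B by (subst mult_entry) (auto simp: Pm_def)
    also have "\<dots> = (\<Sum>l<N. if \<phi> i = l then B $$ (l, j) else 0)" by (rule sum.cong) auto
    also have "\<dots> = B $$ (\<phi> i, j)" using ph[OF i] by (simp add: sum.delta)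
    finally show "(Pm N \<phi> * B) $$ (i, j) = mat N k (\<lambda>(i, j). B $$ (\<phi> i, j)) $$ (i, j)" using i j by simp
  qed (use B in \<open>auto simp: Pm_def\<close>)
qed

lemma mult_PmT: "(\<And>i. i < N \<Longrightarrow> \<phi> i < N) \<Longrightarrow> B \<in> carrier_mat k N \<Longrightarrow>
   B * (Pm N \<phi>)\<^sup>T = mat k N (\<lambda>(i, j). B $$ (i, \<phi> j))"
proof -
  assume ph: "\<And>i. i < N \<Longrightarrow> \<phi> i < N" and B: "B \<in> carrier_mat k N"
  show ?thesis
  proof (rule eq_matI)
    fix i j assume "i < dim_row (mat k N (\<lambda>(i, j). B $$ (i, \<phi> j)))" "j < dim_col (mat k N (\<lambda>(i, j). B $$ (i, \<phi> j)))"
    then have i: "i < k" and j: "j < N" by auto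
    have "(B * (Pm N \<phi>)\<^sup>T) $$ (i, j) = (\<Sum>l<N. B $$ (i, l) * (if l = \<phi> j then 1 else 0))"
      using i j B by (subst mult_entry) (auto simp: Pm_def)
    also have "\<dots> = (\<Sum>l<N. if \<phi> j = l then B $$ (i, l) else 0)" by (rule sum.cong) auto
    also have "\<dots> = B $$ (i, \<phi> j)" using ph[OF j] by (simp add: sum.delta)
    finally show "(B * (Pm N \<phi>)\<^sup>T) $$ (i, j) = mat k N (\<lambda>(i, j). B $$ (i, \<phi> j)) $$ (i, j)" using i j by simp
  qed (use B in \<open>auto simp: Pm_def\<close>)
qed

lemma Pm_carrier[simp]: "Pm N \<phi> \<in> carrier_mat N N" by (simp add: Pm_def)
lemma Zm_carrier[simp]: "Zm n \<in> carrier_mat (Suc (Suc n)) (Suc (Suc n))" by (simp add: Zm_def)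
lemma RRm_carrier[simp]: "RRm n \<in> carrier_mat (Suc (Suc n)) (Suc (Suc n))" by (simp add: RRm_def)

lemma Pm_dims[simp]: "dim_row (Pm N \<phi>) = N" "dim_col (Pm N \<phi>) = N" by (simp_all add: Pm_def)
lemma Zm_dims[simp]: "dim_row (Zm n) = Suc (Suc n)" "dim_col (Zm n) = Suc (Suc n)" by (simp_all add: Zm_def)
lemma RRm_dims[simp]: "dim_row (RRm n) = Suc (Suc n)" "dim_col (RRm n) = Suc (Suc n)" by (simp_all add: RRm_def)

lemma fnx_lt1: "i < Suc (Suc n) \<Longrightarrow> fnx n i < Suc (Suc n)" using fnx_lt[of i n 1] by simp

lemma Z_eq:
  fixes n :: nat
  assumes n1: "n \<ge> 1"
  defines "L \<equiv> 1\<^sub>m (Suc (Suc n)) - Pm (Suc (Suc n)) (fnx n)"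
  shows "L * Zm n + Zm n * L\<^sup>T = RRm n"
proof -
  let ?N = "Suc (Suc n)"
  let ?P = "Pm ?N (fnx n)"
  have LZ: "L * Zm n = Zm n - ?P * Zm n"
    unfolding L_def by (subst minus_mult_distrib_mat[of _ ?N ?N _ _ ?N]) (auto simp: left_mult_one_mat[OF Zm_carrier])
  have ZL: "Zm n * L\<^sup>T = Zm n - Zm n * ?P\<^sup>T"
    unfolding L_def
    by (subst transpose_minus[of _ ?N ?N], simp, simp,
        subst mult_minus_distrib_mat[of _ ?N ?N _ ?N], auto simp: right_mult_one_mat[OF Zm_carrier])
  show ?thesis
  proof (rule eq_matI)
    fix i k assume "i < dim_row (RRm n)" "k < dim_col (RRm n)"
    then have i: "i < ?N" and k: "k < ?N" by (auto simp: RRm_def)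
    define h where "h a b = gg n ((fnx n ^^ a) i) ((fnx n ^^ b) k)" for a b
    have hA: "h n b = 0" for b using fnx_big[OF i] n1 by (simp add: h_def gg_n)
    have hB: "h a n = 0" for a using fnx_big[OF k] n1 by (simp add: h_def gg_n)
    have Zik: "Zm n $$ (i, k) = (\<Sum>a<n. \<Sum>b<n. ww a b * h a b)" using i k by (simp add: Zm_def h_def)
    have Z1: "(?P * Zm n) $$ (i, k) = (\<Sum>a<n. \<Sum>b<n. ww a b * h (Suc a) b)"
    proof -
      have PZ: "?P * Zm n = mat ?N ?N (\<lambda>(i, j). Zm n $$ (fnx n i, j))"
        by (rule Pm_mult) (simp_all add: fnx_lt1)
      show ?thesis using i k fnx_lt1[OF i] unfolding PZ
        by (simp add: Zm_def h_def funpow_Suc_right del: funpow.simps)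
    qed
    have Z2: "(Zm n * ?P\<^sup>T) $$ (i, k) = (\<Sum>a<n. \<Sum>b<n. ww a b * h a (Suc b))"
    proof -
      have ZP: "Zm n * ?P\<^sup>T = mat ?N ?N (\<lambda>(i, j). Zm n $$ (i, fnx n j))"
        by (rule mult_PmT) (simp_all add: fnx_lt1)
      show ?thesis using i k fnx_lt1[OF k] unfolding ZP
        by (simp add: Zm_def h_def funpow_Suc_right del: funpow.simps)
    qed
    have "(L * Zm n + Zm n * L\<^sup>T) $$ (i, k) = 2 * Zm n $$ (i, k) - (?P * Zm n) $$ (i, k) - (Zm n * ?P\<^sup>T) $$ (i, k)"
      unfolding LZ ZL using i k by simp
    also have "\<dots> = h 0 0" unfolding Zik Z1 Z2 by (rule pascal_sum[where h=h and n=n, OF hA hB])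
    finally show "(L * Zm n + Zm n * L\<^sup>T) $$ (i, k) = RRm n $$ (i, k)" using i k by (simp add: h_def RRm_def)
  qed (auto simp: L_def RRm_def)
qed



definition Jm :: "nat \<Rightarrow> real mat" where "Jm N = mat N N (\<lambda>_. 1)"
definition Pim :: "nat \<Rightarrow> real mat" where "Pim N = 1\<^sub>m N - (1 / real N) \<cdot>\<^sub>m Jm N"

lemma Pim_carrier[simp]: "Pim N \<in> carrier_mat N N"
  unfolding Pim_def Jm_def by (rule minus_carrier_mat) auto
lemma Pim_dims[simp]: "dim_row (Pim N) = N" "dim_col (Pim N) = N"
  using Pim_carrier[of N] by (simp_all only: carrier_mat_def mem_Collect_eq)
lemma Pim_entry: "i < N \<Longrightarrow> j < N \<Longrightarrow> Pim N $$ (i, j) = (if i = j then 1 else 0) - 1 / real N"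
  unfolding Pim_def Jm_def by simp
lemma Pim_T: "(Pim N)\<^sup>T = Pim N"
  by (rule eq_matI) (simp_all add: Pim_entry)

lemma Pim_mult: "M \<in> carrier_mat N k \<Longrightarrow>
  Pim N * M = mat N k (\<lambda>(i, j). M $$ (i, j) - (1 / real N) * (\<Sum>l<N. M $$ (l, j)))"
proof (rule eq_matI)
  fix i j assume M: "M \<in> carrier_mat N k" and "i < dim_row (mat N k (\<lambda>(i, j). M $$ (i, j) - (1 / real N) * (\<Sum>l<N. M $$ (l, j))))"
     "j < dim_col (mat N k (\<lambda>(i, j). M $$ (i, j) - (1 / real N) * (\<Sum>l<N. M $$ (l, j))))"
  then have i: "i < N" and j: "j < k" by auto
  have "(Pim N * M) $$ (i, j) = (\<Sum>l<N. ((if i = l then 1 else 0) - 1 / real N) * M $$ (l, j))"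
    using i j M by (subst mult_entry) (auto simp: Pim_entry)
  also have "\<dots> = (\<Sum>l<N. (if i = l then M $$ (l, j) else 0)) - (\<Sum>l<N. (1 / real N) * M $$ (l, j))"
    by (subst sum_subtractf[symmetric]) (rule sum.cong, auto simp: algebra_simps)
  also have "\<dots> = M $$ (i, j) - (1 / real N) * (\<Sum>l<N. M $$ (l, j))"
    using i by (simp add: sum.delta sum_distrib_left)
  finally show "(Pim N * M) $$ (i, j) = mat N k (\<lambda>(i, j). M $$ (i, j) - (1 / real N) * (\<Sum>l<N. M $$ (l, j))) $$ (i, j)"
    using i j by simp
qed auto

lemma mult_Pim: "M \<in> carrier_mat k N \<Longrightarrow>
  M * Pim N = mat k N (\<lambda>(i, j). M $$ (i, j) - (1 / real N) * (\<Sum>l<N. M $$ (i, l)))"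
proof (rule eq_matI)
  fix i j assume M: "M \<in> carrier_mat k N" and "i < dim_row (mat k N (\<lambda>(i, j). M $$ (i, j) - (1 / real N) * (\<Sum>l<N. M $$ (i, l))))"
     "j < dim_col (mat k N (\<lambda>(i, j). M $$ (i, j) - (1 / real N) * (\<Sum>l<N. M $$ (i, l))))"
  then have i: "i < k" and j: "j < N" by auto
  have "(M * Pim N) $$ (i, j) = (\<Sum>l<N. M $$ (i, l) * ((if l = j then 1 else 0) - 1 / real N))"
    using i j M by (subst mult_entry) (auto simp: Pim_entry)
  also have "\<dots> = (\<Sum>l<N. (if j = l then M $$ (i, l) else 0)) - (\<Sum>l<N. (1 / real N) * M $$ (i, l))"
    by (subst sum_subtractf[symmetric]) (rule sum.cong, auto simp: algebra_simps)
  also have "\<dots> = M $$ (i, j) - (1 / real N) * (\<Sum>l<N. M $$ (i, l))"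
    using j by (simp add: sum.delta sum_distrib_left)
  finally show "(M * Pim N) $$ (i, j) = mat k N (\<lambda>(i, j). M $$ (i, j) - (1 / real N) * (\<Sum>l<N. M $$ (i, l))) $$ (i, j)"
    using i j by simp
qed auto

lemma sum_delta_count: "g \<in> {..<N} \<rightarrow> {..<N} \<Longrightarrow> True" by simp

lemma Pim_Pm_Pim:
  assumes g: "\<And>i. i < N \<Longrightarrow> g i < N" and N: "N > 0"
  shows "Pim N * (Pm N g * Pim N) = Pim N * Pm N g"
proof -
  have PP: "Pm N g * Pim N = mat N N (\<lambda>(i, j). (if j = g i then 1 else 0) - 1 / real N)"
    by (subst Pm_mult[OF g Pim_carrier], assumption) (rule eq_matI, auto simp: Pim_entry g)
  show ?thesis
  proof (rule eq_matI)
    fix i j assume "i < dim_row (Pim N * Pm N g)" "j < dim_col (Pim N * Pm N g)"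
    then have i: "i < N" and j: "j < N" by auto
    have "(\<Sum>l<N. (if j = g l then 1 else 0) - 1 / real N) = (\<Sum>l<N. (if j = g l then 1 else 0)) - 1"
      using N by (simp add: sum_subtractf)
    moreover have "(Pim N * mat N N (\<lambda>(i, j). (if j = g i then 1 else 0) - 1 / real N)) $$ (i, j)
       = ((if j = g i then 1 else 0) - 1 / real N) - (1 / real N) * (\<Sum>l<N. (if j = g l then 1 else 0) - 1 / real N)"
    proof -
      have c1: "mat N N (\<lambda>(i, j). (if j = g i then 1 else 0) - 1 / real N) \<in> carrier_mat N N" by simp
      show ?thesis unfolding Pim_mult[OF c1] using i j by simp
    qed
    moreover have "(Pim N * Pm N g) $$ (i, j) = (if j = g i then 1 else 0) - (1 / real N) * (\<Sum>l<N. if j = g l then 1 else 0)"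
      unfolding Pim_mult[OF Pm_carrier] using i j by (simp add: Pm_def)
    ultimately show "(Pim N * (Pm N g * Pim N)) $$ (i, j) = (Pim N * Pm N g) $$ (i, j)"
      unfolding PP by (simp add: diff_divide_distrib)
  qed auto
qed

lemma Pim_Pm_const:
  assumes c: "\<And>i. i < N \<Longrightarrow> g i = c" and N: "N > 0"
  shows "Pim N * Pm N g = 0\<^sub>m N N"
proof (rule eq_matI)
  fix i j assume "i < dim_row (0\<^sub>m N N :: real mat)" "j < dim_col (0\<^sub>m N N :: real mat)"
  then have i: "i < N" and j: "j < N" by auto
  have "(\<Sum>l<N. (if j = g l then 1 else 0 :: real)) = (\<Sum>l<N. (if j = c then 1 else 0))"
    by (rule sum.cong) (auto simp: c)
  then show "(Pim N * Pm N g) $$ (i, j) = 0\<^sub>m N N $$ (i, j)"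
    using i j N c[OF i] by (subst Pim_mult[OF Pm_carrier]) (simp add: Pm_def)
qed auto

lemma Pm_Pm: assumes g: "\<And>i. i < N \<Longrightarrow> g i < N" shows "Pm N g * Pm N h = Pm N (h \<circ> g)"
proof -
  have "Pm N g * Pm N h = mat N N (\<lambda>(i, j). Pm N h $$ (g i, j))" by (rule Pm_mult[OF g Pm_carrier])
  also have "\<dots> = Pm N (h \<circ> g)" unfolding Pm_def by (rule eq_matI) (simp_all add: g)
  finally show ?thesis .
qed

lemma Pm_id: "Pm N (\<lambda>i. i) = 1\<^sub>m N"
  by (rule eq_matI) (auto simp: Pm_def)



lemma mult_carrier_iff: "A * B \<in> carrier_mat r c \<longleftrightarrow> dim_row A = r \<and> dim_col B = c"
  unfolding carrier_mat_def by simp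
lemma transpose_carrier_iff: "A\<^sup>T \<in> carrier_mat r c \<longleftrightarrow> dim_col A = r \<and> dim_row A = c"
  unfolding carrier_mat_def by simp
lemma add_self_zero:
  fixes X :: "real mat"
  assumes X: "X \<in> carrier_mat N N" and XX: "X + X = 0\<^sub>m N N"
  shows "X = 0\<^sub>m N N"
proof (rule eq_matI)
  fix i j assume "i < dim_row (0\<^sub>m N N :: real mat)" "j < dim_col (0\<^sub>m N N :: real mat)"
  then have i: "i < N" and j: "j < N" by auto
  have "(X + X) $$ (i, j) = 0" using XX i j by simp
  then show "X $$ (i, j) = 0\<^sub>m N N $$ (i, j)" using X i j by simp
qed (use X in auto)

lemma W_zero:
  fixes W :: "real mat" and f :: "nat \<Rightarrow> nat"
  assumes N: "N > 0"
    and f: "\<And>i. i < N \<Longrightarrow> f i < N"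
    and cst: "\<And>i. i < N \<Longrightarrow> (f ^^ n) i = c"
    and cW: "W \<in> carrier_mat N N"
    and W1: "Pim N * W = W" and W2: "W * Pim N = W"
    and E: "Pim N * (Pm N f * W) + W * ((Pm N f)\<^sup>T * Pim N) = W + W"
  shows "W = 0\<^sub>m N N"
proof -
  note AS = assoc_mult_mat[of _ N N _ N _ N]
  note [simp] = mult_carrier_iff transpose_carrier_iff
  let ?Pi = "Pim N"
  let ?P = "\<lambda>a. Pm N (f ^^ a)"
  have fa: "(f ^^ a) i < N" if "i < N" for a i
    using that by (induction a) (auto simp: f)
  define T where "T a b = ?Pi * (?P a * (W * ((?P b)\<^sup>T * ?Pi)))" for a b
  have cT: "T a b \<in> carrier_mat N N" for a b using cW unfolding T_def carrier_mat_def by simp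
  have z0: "?Pi * ?P a = 0\<^sub>m N N" if na: "n \<le> a" for a
  proof (rule Pim_Pm_const[OF _ N])
    fix i assume i: "i < N"
    obtain k where k: "a = k + n" using na le_iff_add[of n a] by (auto simp: add.commute)
    have "(f ^^ a) i = (f ^^ (a - n)) ((f ^^ n) i)"
      unfolding k by (simp add: funpow_add)
    then show "(f ^^ a) i = (f ^^ (a - n)) c" using cst[OF i] by simp
  qed
  have za: "T a b = 0\<^sub>m N N" if "n \<le> a" for a b
  proof -
    have "T a b = (?Pi * ?P a) * (W * ((?P b)\<^sup>T * ?Pi))" unfolding T_def using cW
      by (subst assoc_mult_mat[of _ N N _ N _ N]) auto
    then show ?thesis using z0[OF that] cW by simp
  qed
  have zb: "T a b = 0\<^sub>m N N" if "n \<le> b" for a b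
  proof -
    have "(?P b)\<^sup>T * ?Pi = (?Pi * ?P b)\<^sup>T"
      by (subst transpose_mult[of _ N N _ N]) (auto simp: Pim_T)
    then have "(?P b)\<^sup>T * ?Pi = 0\<^sub>m N N" using z0[OF that] by simp
    then show ?thesis unfolding T_def using cW by simp
  qed
  have H1: "?Pi * (Pm N g * (?Pi * Y)) = ?Pi * (Pm N g * Y)" if g: "\<And>i. i < N \<Longrightarrow> g i < N" and Y: "Y \<in> carrier_mat N k" for g Y k
  proof -
    have "?Pi * (Pm N g * (?Pi * Y)) = (?Pi * (Pm N g * ?Pi)) * Y"
      using Y by (simp add: assoc_mult_mat[of _ N N _ N _ k])
    also have "\<dots> = (?Pi * Pm N g) * Y" using Pim_Pm_Pim[OF g N] by simp
    also have "\<dots> = ?Pi * (Pm N g * Y)" using Y by (simp add: assoc_mult_mat[of _ N N _ N _ k])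
    finally show ?thesis .
  qed
  have H2: "?P a * (Pm N f * Y) = ?P (Suc a) * Y" if Y: "Y \<in> carrier_mat N k" for a Y k
  proof -
    have "?P a * (Pm N f * Y) = (?P a * Pm N f) * Y" using Y by (simp add: assoc_mult_mat[of _ N N _ N _ k])
    also have "?P a * Pm N f = ?P (Suc a)" using Pm_Pm[of N "f ^^ a" f] fa by simp
    finally show ?thesis .
  qed
  have H3: "?Pi * ((Pm N g)\<^sup>T * ?Pi) = (Pm N g)\<^sup>T * ?Pi" if g: "\<And>i. i < N \<Longrightarrow> g i < N" for g
  proof -
    have "(?Pi * (Pm N g * ?Pi))\<^sup>T = ?Pi * ((Pm N g)\<^sup>T * ?Pi)"
      by (simp add: transpose_mult[of _ N N _ N] Pim_T assoc_mult_mat[of _ N N _ N _ N])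
    moreover have "(?Pi * Pm N g)\<^sup>T = (Pm N g)\<^sup>T * ?Pi"
      by (simp add: transpose_mult[of _ N N _ N] Pim_T)
    ultimately show ?thesis using Pim_Pm_Pim[OF g N] by simp
  qed
  have H4: "(Pm N f)\<^sup>T * ((?P b)\<^sup>T * ?Pi) = (?P (Suc b))\<^sup>T * ?Pi" for b
  proof -
    have "(Pm N f)\<^sup>T * ((?P b)\<^sup>T * ?Pi) = ((?P b) * Pm N f)\<^sup>T * ?Pi"
      by (simp add: transpose_mult[of _ N N _ N] assoc_mult_mat[of _ N N _ N _ N])
    also have "?P b * Pm N f = ?P (Suc b)" using Pm_Pm[of N "f ^^ b" f] fa by simp
    finally show ?thesis .
  qed
  have rec: "T a b + T a b = T (Suc a) b + T a (Suc b)" for a b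
  proof -
    have "T a b + T a b = ?Pi * (?P a * ((W + W) * ((?P b)\<^sup>T * ?Pi)))"
    proof -
      have cX: "(?P b)\<^sup>T * ?Pi \<in> carrier_mat N N" by simp
      have "(W + W) * ((?P b)\<^sup>T * ?Pi) = W * ((?P b)\<^sup>T * ?Pi) + W * ((?P b)\<^sup>T * ?Pi)"
        by (rule add_mult_distrib_mat[OF cW cW cX])
      moreover have "?P a * (W * ((?P b)\<^sup>T * ?Pi) + W * ((?P b)\<^sup>T * ?Pi))
          = ?P a * (W * ((?P b)\<^sup>T * ?Pi)) + ?P a * (W * ((?P b)\<^sup>T * ?Pi))"
        by (rule mult_add_distrib_mat[of _ N N]) (use cW in simp_all)
      moreover have "?Pi * (?P a * (W * ((?P b)\<^sup>T * ?Pi)) + ?P a * (W * ((?P b)\<^sup>T * ?Pi)))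
          = T a b + T a b"
        unfolding T_def by (rule mult_add_distrib_mat[of _ N N]) (use cW in simp_all)
      ultimately show ?thesis by simp
    qed
    also have "\<dots> = ?Pi * (?P a * ((?Pi * (Pm N f * W) + W * ((Pm N f)\<^sup>T * ?Pi)) * ((?P b)\<^sup>T * ?Pi)))"
      by (simp only: E)
    also have "\<dots> = ?Pi * (?P a * (?Pi * (Pm N f * (W * ((?P b)\<^sup>T * ?Pi)))))
        + ?Pi * (?P a * (W * ((Pm N f)\<^sup>T * (?Pi * ((?P b)\<^sup>T * ?Pi)))))"
      using cW by (simp add: add_mult_distrib_mat[of _ N N] mult_add_distrib_mat[of _ N N] AS)
    also have "?Pi * (?P a * (?Pi * (Pm N f * (W * ((?P b)\<^sup>T * ?Pi))))) = T (Suc a) b"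
      unfolding T_def using cW fa by (simp add: H1 H2)
    also have "?Pi * (?P a * (W * ((Pm N f)\<^sup>T * (?Pi * ((?P b)\<^sup>T * ?Pi))))) = T a (Suc b)"
      unfolding T_def using fa by (simp add: H3 H4)
    finally show ?thesis .
  qed
  have all0: "\<forall>a b. 2 * n \<le> a + b + d \<longrightarrow> T a b = 0\<^sub>m N N" for d
  proof (induction d)
    case 0
    show ?case
    proof (intro allI impI)
      fix a b assume "2 * n \<le> a + b + 0"
      then have "n \<le> a \<or> n \<le> b" by linarith
      then show "T a b = 0\<^sub>m N N" using za zb by blast
    qed
  next
    case (Suc d)
    show ?case
    proof (intro allI impI)
      fix a b assume ab: "2 * n \<le> a + b + Suc d"
      show "T a b = 0\<^sub>m N N"
      proof (cases "n \<le> a \<or> n \<le> b")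
        case True then show ?thesis using za zb by auto
      next
        case False
        then have "T (Suc a) b = 0\<^sub>m N N" "T a (Suc b) = 0\<^sub>m N N" using Suc.IH ab by auto
        then have "T a b + T a b = 0\<^sub>m N N" using rec[of a b] by simp
        then show ?thesis using add_self_zero[OF cT] by blast
      qed
    qed
  qed
  have P0: "?P 0 = 1\<^sub>m N" using Pm_id[of N] by (simp add: id_def)
  have "T 0 0 = ?Pi * (1\<^sub>m N * (W * (1\<^sub>m N * ?Pi)))" unfolding T_def P0 by simp
  also have "\<dots> = ?Pi * (W * ?Pi)" using cW by simp
  also have "\<dots> = W" using W1 W2 by simp
  finally have "T 0 0 = W" .
  then show ?thesis using all0[of "2 * n"] by simp
qed



lemma QTQ_Pim: "is_Q_matrix N Q \<Longrightarrow> Q\<^sup>T * Q = Pim N"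
  unfolding is_Q_matrix_def Pim_def Jm_def by simp

lemma Q_rowsum: assumes Q: "is_Q_matrix N Q" and i: "i < N - 1"
  shows "(\<Sum>k<N. Q $$ (i, k)) = 0"
proof -
  have cQ: "Q \<in> carrier_mat (N - 1) N" using Q by (simp add: is_Q_matrix_def)
  have "(Q *\<^sub>v vec N (\<lambda>_. 1)) $ i = 0" using Q i by (simp add: is_Q_matrix_def)
  then show ?thesis using cQ i by (simp add: mult_mat_vec_def scalar_prod_def atLeast0LessThan)
qed

lemma Q_RR:
  assumes Q: "is_Q_matrix (Suc (Suc n)) Q"
  shows "Q * RRm n * Q\<^sup>T = 1\<^sub>m (Suc n)"
proof -
  let ?N = "Suc (Suc n)"
  have cQ: "Q \<in> carrier_mat (Suc n) ?N" using Q by (simp add: is_Q_matrix_def)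
  have QQ: "Q * Q\<^sup>T = 1\<^sub>m (Suc n)" using Q by (simp add: is_Q_matrix_def)
  have rs: "(\<Sum>k<?N. Q $$ (i, k)) = 0" if "i < Suc n" for i using Q_rowsum[OF Q] that by simp
  have QR: "Q * RRm n = mat (Suc n) ?N (\<lambda>(i, k). Q $$ (i, k) - Q $$ (i, n))"
  proof (rule eq_matI)
    fix i k assume "i < dim_row (mat (Suc n) ?N (\<lambda>(i, k). Q $$ (i, k) - Q $$ (i, n)))"
      "k < dim_col (mat (Suc n) ?N (\<lambda>(i, k). Q $$ (i, k) - Q $$ (i, n)))"
    then have i: "i < Suc n" and k: "k < ?N" by auto
    have "(Q * RRm n) $$ (i, k) = (\<Sum>l<?N. Q $$ (i, l) * gg n l k)"
      using i k cQ by (subst mult_entry) (auto simp: RRm_def)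
    also have "\<dots> = (\<Sum>l<?N. (if k = l then Q $$ (i, l) else 0)) - (\<Sum>l<?N. (if n = l then Q $$ (i, l) else 0))
        + (1 - (if k = n then 1 else 0)) * (\<Sum>l<?N. Q $$ (i, l))"
    proof -
      have pt: "Q $$ (i, l) * gg n l k = (if k = l then Q $$ (i, l) else 0) - (if n = l then Q $$ (i, l) else 0)
          + (1 - (if k = n then 1 else 0)) * Q $$ (i, l)" for l
        by (simp add: gg_def algebra_simps)
      show ?thesis by (simp only: pt sum.distrib sum_subtractf sum_distrib_left)
    qed
    also have "\<dots> = Q $$ (i, k) - Q $$ (i, n)" using k rs[OF i] by (simp add: sum.delta del: sum.lessThan_Suc)
    finally show "(Q * RRm n) $$ (i, k) = mat (Suc n) ?N (\<lambda>(i, k). Q $$ (i, k) - Q $$ (i, n)) $$ (i, k)"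
      using i k by simp
  qed (use cQ in auto)
  show ?thesis
  proof (rule eq_matI)
    fix i i' assume "i < dim_row (1\<^sub>m (Suc n) :: real mat)" "i' < dim_col (1\<^sub>m (Suc n) :: real mat)"
    then have i: "i < Suc n" and i': "i' < Suc n" by auto
    have "(Q * RRm n * Q\<^sup>T) $$ (i, i') = (\<Sum>k<?N. (Q $$ (i, k) - Q $$ (i, n)) * Q $$ (i', k))"
      unfolding QR using i i' cQ by (subst mult_entry) auto
    also have "\<dots> = (\<Sum>k<?N. Q $$ (i, k) * Q $$ (i', k)) - Q $$ (i, n) * (\<Sum>k<?N. Q $$ (i', k))"
      by (simp add: sum_subtractf sum_distrib_left algebra_simps)
    also have "(\<Sum>k<?N. Q $$ (i, k) * Q $$ (i', k)) = (Q * Q\<^sup>T) $$ (i, i')"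
      using i i' cQ by (subst mult_entry) auto
    finally show "(Q * RRm n * Q\<^sup>T) $$ (i, i') = 1\<^sub>m (Suc n) $$ (i, i')"
      using rs[OF i'] QQ i i' by simp
  qed (use cQ in auto)
qed


lemma Q_facts:
  assumes Q: "is_Q_matrix N Q"
  shows "Q \<in> carrier_mat (N - 1) N" "Q * Q\<^sup>T = 1\<^sub>m (N - 1)" "Q\<^sup>T * Q = Pim N"
    "dim_row X = N \<Longrightarrow> Q\<^sup>T * (Q * X) = Pim N * X"
    "dim_row Y = N - 1 \<Longrightarrow> Q * (Q\<^sup>T * Y) = Y"
proof -
  show cQ: "Q \<in> carrier_mat (N - 1) N" using Q by (simp add: is_Q_matrix_def)
  show QQ: "Q * Q\<^sup>T = 1\<^sub>m (N - 1)" using Q by (simp add: is_Q_matrix_def)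
  show QTQ: "Q\<^sup>T * Q = Pim N" using QTQ_Pim[OF Q] .
  show "dim_row X = N \<Longrightarrow> Q\<^sup>T * (Q * X) = Pim N * X"
  proof -
    assume X: "dim_row X = N"
    have "Q\<^sup>T * (Q * X) = (Q\<^sup>T * Q) * X"
      using cQ X by (subst assoc_mult_mat[of _ N "N - 1" _ N _ "dim_col X"]) (auto intro: carrier_matI)
    then show ?thesis using QTQ by simp
  qed
  show "dim_row Y = N - 1 \<Longrightarrow> Q * (Q\<^sup>T * Y) = Y"
  proof -
    assume Y: "dim_row Y = N - 1"
    have "Q * (Q\<^sup>T * Y) = (Q * Q\<^sup>T) * Y"
      using cQ Y by (subst assoc_mult_mat[of _ "N - 1" N _ "N - 1" _ "dim_col Y"]) (auto intro: carrier_matI)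
    moreover have "Y \<in> carrier_mat (N - 1) (dim_col Y)" using Y by (auto intro: carrier_matI)
    ultimately show ?thesis using QQ by simp
  qed
qed

lemma QLQ_T:
  fixes Q L :: "real mat"
  assumes cQ: "Q \<in> carrier_mat m N" and cL: "L \<in> carrier_mat N N"
  shows "(Q * L * Q\<^sup>T)\<^sup>T = Q * L\<^sup>T * Q\<^sup>T"
proof -
  have "(Q * L * Q\<^sup>T)\<^sup>T = (Q\<^sup>T)\<^sup>T * (Q * L)\<^sup>T"
    by (rule transpose_mult[of _ m N _ m]) (use cQ cL in auto)
  also have "(Q * L)\<^sup>T = L\<^sup>T * Q\<^sup>T"
    by (rule transpose_mult[of _ m N _ N]) (use cQ cL in auto)
  finally show ?thesis using cQ cL by (simp add: assoc_mult_mat[of _ m N _ N _ m])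
qed

lemma sandwich:
  fixes Q L Z RR :: "real mat"
  assumes Q: "is_Q_matrix N Q" and cL: "L \<in> carrier_mat N N" and cZ: "Z \<in> carrier_mat N N"
    and cR: "RR \<in> carrier_mat N N" and LPi: "L * Pim N = L"
    and eq: "L * Z + Z * L\<^sup>T = RR" and QR: "Q * RR * Q\<^sup>T = 1\<^sub>m (N - 1)"
  shows "Q * L * Q\<^sup>T * (Q * Z * Q\<^sup>T) + Q * Z * Q\<^sup>T * (Q * L * Q\<^sup>T)\<^sup>T = 1\<^sub>m (N - 1)"
proof -
  note [simp] = mult_carrier_iff transpose_carrier_iff
  note AS = assoc_mult_mat[of _ "N - 1" "N - 1" _ "N - 1" _ "N - 1"] assoc_mult_mat[of _ "N - 1" "N - 1" _ "N - 1" _ "N"] assoc_mult_mat[of _ "N - 1" "N - 1" _ "N" _ "N - 1"] assoc_mult_mat[of _ "N - 1" "N - 1" _ "N" _ "N"] assoc_mult_mat[of _ "N - 1" "N" _ "N - 1" _ "N - 1"] assoc_mult_mat[of _ "N - 1" "N" _ "N - 1" _ "N"] assoc_mult_mat[of _ "N - 1" "N" _ "N" _ "N - 1"] assoc_mult_mat[of _ "N - 1" "N" _ "N" _ "N"] assoc_mult_mat[of _ "N" "N - 1" _ "N - 1" _ "N - 1"] assoc_mult_mat[of _ "N" "N - 1" _ "N - 1" _ "N"] assoc_mult_mat[of _ "N" "N - 1" _ "N" _ "N - 1"] assoc_mult_mat[of _ "N" "N - 1" _ "N" _ "N"] assoc_mult_mat[of _ "N" "N" _ "N - 1" _ "N -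 1"] assoc_mult_mat[of _ "N" "N" _ "N - 1" _ "N"] assoc_mult_mat[of _ "N" "N" _ "N" _ "N - 1"] assoc_mult_mat[of _ "N" "N" _ "N" _ "N"]
  have cQ: "Q \<in> carrier_mat (N - 1) N" and R2: "\<And>X. dim_row X = N \<Longrightarrow> Q\<^sup>T * (Q * X) = Pim N * X"
    using Q_facts[OF Q] by auto
  have PiLT: "Pim N * L\<^sup>T = L\<^sup>T"
  proof -
    have "(L * Pim N)\<^sup>T = (Pim N)\<^sup>T * L\<^sup>T" using cL by (simp add: transpose_mult[of _ N N _ N])
    then show ?thesis using LPi Pim_T by simp
  qed
  have LP2: "L * (Pim N * X) = L * X" if "dim_row X = N" for X
  proof -
    have "L * (Pim N * X) = (L * Pim N) * X"
      using cL that by (subst assoc_mult_mat[of _ N N _ N _ "dim_col X"]) (auto intro: carrier_matI)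
    then show ?thesis using LPi by simp
  qed
  have PL2: "Pim N * (L\<^sup>T * X) = L\<^sup>T * X" if "dim_row X = N" for X
  proof -
    have "Pim N * (L\<^sup>T * X) = (Pim N * L\<^sup>T) * X"
      using cL that by (subst assoc_mult_mat[of _ N N _ N _ "dim_col X"]) (auto intro: carrier_matI)
    then show ?thesis using PiLT by simp
  qed
  have tr: "(Q * L * Q\<^sup>T)\<^sup>T = Q * L\<^sup>T * Q\<^sup>T" by (rule QLQ_T[OF cQ cL])
  have e1: "Q * L * Q\<^sup>T * (Q * Z * Q\<^sup>T) = Q * (L * (Z * Q\<^sup>T))"
    using cQ cL cZ by (simp add: AS R2 LP2)
  have e2: "Q * Z * Q\<^sup>T * (Q * L\<^sup>T * Q\<^sup>T) = Q * (Z * (L\<^sup>T * Q\<^sup>T))"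
    using cQ cL cZ by (simp add: AS R2 PL2)
  have "Q * (L * (Z * Q\<^sup>T)) + Q * (Z * (L\<^sup>T * Q\<^sup>T)) = Q * ((L * Z + Z * L\<^sup>T) * Q\<^sup>T)"
    using cQ cL cZ by (simp add: add_mult_distrib_mat[of _ N N] mult_add_distrib_mat[of _ "N - 1" N] AS)
  also have "\<dots> = 1\<^sub>m (N - 1)" using eq QR cQ cR by (simp add: AS)
  finally show ?thesis using e1 e2 tr by simp
qed

lemma mat_cancel:
  fixes A B C :: "real mat"
  assumes "A \<in> carrier_mat N N" "B \<in> carrier_mat N N" "C \<in> carrier_mat N N"
    and "(C - A) + (C - B) = 0\<^sub>m N N"
  shows "A + B = C + C"
proof (rule eq_matI)
  fix i j assume "i < dim_row (C + C)" "j < dim_col (C + C)"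
  then have i: "i < N" and j: "j < N" using assms by auto
  have "((C - A) + (C - B)) $$ (i, j) = (0\<^sub>m N N :: real mat) $$ (i, j)" by (simp only: assms(4))
  then have h0: "((C - A) + (C - B)) $$ (i, j) = 0" using i j by simp
  have "((C - A) + (C - B)) $$ (i, j) = (C $$ (i, j) - A $$ (i, j)) + (C $$ (i, j) - B $$ (i, j))"
    using assms(1-3) i j by simp
  then have "(C $$ (i, j) - A $$ (i, j)) + (C $$ (i, j) - B $$ (i, j)) = 0" using h0 by simp
  then have "A $$ (i, j) + B $$ (i, j) = C $$ (i, j) + C $$ (i, j)" by linarith
  then show "(A + B) $$ (i, j) = (C + C) $$ (i, j)" using assms i j by simp
qed (use assms in auto)

lemma Lb_unique:
  fixes Q D :: "real mat" and f :: "nat \<Rightarrow> nat"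
  assumes Q: "is_Q_matrix N Q" and N: "N > 0"
    and f: "\<And>i. i < N \<Longrightarrow> f i < N"
    and cst: "\<And>i. i < N \<Longrightarrow> (f ^^ n) i = c"
    and cD: "D \<in> carrier_mat (N - 1) (N - 1)"
    and eq: "Q * (1\<^sub>m N - Pm N f) * Q\<^sup>T * D + D * (Q * (1\<^sub>m N - Pm N f) * Q\<^sup>T)\<^sup>T = 0\<^sub>m (N - 1) (N - 1)"
  shows "D = 0\<^sub>m (N - 1) (N - 1)"
proof -
  note [simp] = mult_carrier_iff transpose_carrier_iff
  note AS = assoc_mult_mat[of _ "N - 1" "N - 1" _ "N - 1" _ "N - 1"] assoc_mult_mat[of _ "N - 1" "N - 1" _ "N - 1" _ "N"] assoc_mult_mat[of _ "N - 1" "N - 1" _ "N" _ "N - 1"] assoc_mult_mat[of _ "N - 1" "N - 1" _ "N" _ "N"] assoc_mult_mat[of _ "N - 1" "N" _ "N - 1" _ "N - 1"] assoc_mult_mat[of _ "N - 1" "N" _ "N - 1" _ "N"] assoc_mult_mat[of _ "N - 1" "N" _ "N" _ "N - 1"] assoc_mult_mat[of _ "N - 1" "N" _ "N" _ "N"] assoc_mult_mat[of _ "N" "N - 1" _ "N - 1" _ "N - 1"] assoc_mult_mat[of _ "N" "N - 1" _ "N - 1" _ "N"] assoc_mult_mat[of _ "N" "N - 1" _ "N" _ "N - 1"] assoc_mult_mat[of _ "N" "N - 1" _ "N" _ "N"] assoc_mult_mat[of _ "N" "N" _ "N - 1" _ "N - 1"] assoc_mult_mat[of _ "N" "N" _ "N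 - 1" _ "N"] assoc_mult_mat[of _ "N" "N" _ "N" _ "N - 1"] assoc_mult_mat[of _ "N" "N" _ "N" _ "N"]
  let ?P = "Pm N f"
  define L where "L = 1\<^sub>m N - ?P"
  have cL: "L \<in> carrier_mat N N" unfolding L_def by (rule minus_carrier_mat) auto
  have cQ: "Q \<in> carrier_mat (N - 1) N" and QQ: "Q * Q\<^sup>T = 1\<^sub>m (N - 1)" and QTQ: "Q\<^sup>T * Q = Pim N"
    and R2: "\<And>X. dim_row X = N \<Longrightarrow> Q\<^sup>T * (Q * X) = Pim N * X"
    and R1: "\<And>Y. dim_row Y = N - 1 \<Longrightarrow> Q * (Q\<^sup>T * Y) = Y"
    using Q_facts[OF Q] by auto
  define W where "W = Q\<^sup>T * (D * Q)"
  have cW: "W \<in> carrier_mat N N" unfolding W_def using cQ cD by simp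
  have tr: "(Q * L * Q\<^sup>T)\<^sup>T = Q * L\<^sup>T * Q\<^sup>T" by (rule QLQ_T[OF cQ cL])
  have "Q\<^sup>T * ((Q * L * Q\<^sup>T * D + D * (Q * L * Q\<^sup>T)\<^sup>T) * Q) = 0\<^sub>m N N"
    using eq cQ unfolding L_def by simp
  moreover have "Q\<^sup>T * ((Q * L * Q\<^sup>T * D + D * (Q * L * Q\<^sup>T)\<^sup>T) * Q) = Pim N * (L * W) + W * (L\<^sup>T * Pim N)"
    unfolding tr W_def using cQ cL cD
    by (simp add: add_mult_distrib_mat[of _ "N - 1" "N - 1"] mult_add_distrib_mat[of _ N "N - 1"] AS R2 QTQ)
  ultimately have E0: "Pim N * (L * W) + W * (L\<^sup>T * Pim N) = 0\<^sub>m N N" by simp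
  have W1: "Pim N * W = W"
  proof -
    have "Pim N * W = (Q\<^sup>T * Q) * W" using QTQ by simp
    also have "\<dots> = Q\<^sup>T * (Q * (Q\<^sup>T * (D * Q)))" unfolding W_def using cQ cD by (simp add: AS)
    also have "\<dots> = W" unfolding W_def using cD cQ by (simp add: R1)
    finally show ?thesis .
  qed
  have W2: "W * Pim N = W"
  proof -
    have "W * Pim N = W * (Q\<^sup>T * Q)" using QTQ by simp
    also have "\<dots> = Q\<^sup>T * (D * (Q * (Q\<^sup>T * Q)))" unfolding W_def using cQ cD by (simp add: AS)
    also have "\<dots> = W" unfolding W_def using cD cQ by (simp add: R1)
    finally show ?thesis .
  qed
  have LW: "Pim N * (L * W) = W - Pim N * (?P * W)"
  proof -
    have "L * W = W - ?P * W" unfolding L_def using cW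
      by (subst minus_mult_distrib_mat[of _ N N]) auto
    then have "Pim N * (L * W) = Pim N * W - Pim N * (?P * W)"
      using cW by (simp add: mult_minus_distrib_mat[of _ N N])
    then show ?thesis using W1 by simp
  qed
  have WL: "W * (L\<^sup>T * Pim N) = W - W * (?P\<^sup>T * Pim N)"
  proof -
    have "L\<^sup>T = 1\<^sub>m N - ?P\<^sup>T" unfolding L_def by (subst transpose_minus[of _ N N]) auto
    then have "L\<^sup>T * Pim N = Pim N - ?P\<^sup>T * Pim N"
      by (simp, subst minus_mult_distrib_mat[of _ N N]) auto
    then have "W * (L\<^sup>T * Pim N) = W * Pim N - W * (?P\<^sup>T * Pim N)"
      using cW by (simp, subst mult_minus_distrib_mat[of _ N N]) auto
    then show ?thesis using W2 by simp
  qed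
  have E: "Pim N * (?P * W) + W * (?P\<^sup>T * Pim N) = W + W"
    by (rule mat_cancel[of _ N]) (use E0 LW WL cW in simp_all)
  have W0: "W = 0\<^sub>m N N" by (rule W_zero[OF N f cst cW W1 W2 E])
  have "D = Q * (Q\<^sup>T * (D * (Q * Q\<^sup>T)))" using cD cQ by (simp add: R1 QQ)
  also have "\<dots> = Q * W * Q\<^sup>T" unfolding W_def using cD cQ by (simp add: AS)
  finally show ?thesis using W0 cQ by simp
qed



lemma tree_edge_n1: "i < Suc (Suc n) \<Longrightarrow> tree_edge n 1 i j \<longleftrightarrow> (i \<noteq> n \<and> j = fnx n i)"
  by (auto simp: tree_edge_def fnx_def)

lemma tree_dims[simp]: "dim_row (tree_adj n 1) = Suc (Suc n)" "dim_col (tree_adj n 1) = Suc (Suc n)"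
  "dim_row (tree_adj n (Suc 0)) = Suc (Suc n)" "dim_col (tree_adj n (Suc 0)) = Suc (Suc n)"
  by (simp_all add: tree_adj_def)

lemma tree_A: "i < Suc (Suc n) \<Longrightarrow> l < Suc (Suc n) \<Longrightarrow>
   tree_adj n (Suc 0) $$ (i, l) = (if i \<noteq> n \<and> l = fnx n i then 1 else 0)"
  by (auto simp: tree_adj_def tree_edge_def fnx_def)

lemma tree_deg: assumes i: "i < Suc (Suc n)"
  shows "out_degree (tree_adj n (Suc 0)) i = (if i = n then 0 else 1)"
proof -
  have "out_degree (tree_adj n (Suc 0)) i = (\<Sum>l<Suc (Suc n). if i \<noteq> n \<and> l = fnx n i then 1 else 0)"
    unfolding out_degree_def tree_dims by (rule sum.cong) (simp_all add: tree_A[OF i])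
  also have "\<dots> = (if i = n then 0 else 1)"
    using fnx_lt1[OF i] by (cases "i = n") (simp_all add: sum.delta')
  finally show ?thesis .
qed

lemma tree_lap: "laplacian (tree_adj n 1) = 1\<^sub>m (Suc (Suc n)) - Pm (Suc (Suc n)) (fnx n)"
proof (rule eq_matI)
  let ?N = "Suc (Suc n)"
  fix i j assume "i < dim_row (1\<^sub>m ?N - Pm ?N (fnx n))" "j < dim_col (1\<^sub>m ?N - Pm ?N (fnx n))"
  then have i: "i < ?N" and j: "j < ?N" by auto
  have fi: "i \<noteq> n \<Longrightarrow> fnx n i \<noteq> i" by (auto simp: fnx_def)
  have "laplacian (tree_adj n 1) $$ (i, j) = (if i = j then out_degree (tree_adj n (Suc 0)) i else 0) - tree_adj n (Suc 0) $$ (i, j)"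
    using i j by (simp add: laplacian_def)
  also have "\<dots> = (if i = j then (if i = n then 0 else 1) else 0) - (if i \<noteq> n \<and> j = fnx n i then 1 else 0)"
    by (simp only: tree_deg[OF i] tree_A[OF i j])
  also have "\<dots> = (1\<^sub>m ?N - Pm ?N (fnx n)) $$ (i, j)"
    using i j fi by (auto simp: Pm_def fnx_def)
  finally show "laplacian (tree_adj n 1) $$ (i, j) = (1\<^sub>m ?N - Pm ?N (fnx n)) $$ (i, j)" .
qed (auto simp: laplacian_def)

lemma L_Pim: "(1\<^sub>m (Suc (Suc n)) - Pm (Suc (Suc n)) (fnx n)) * Pim (Suc (Suc n))
   = 1\<^sub>m (Suc (Suc n)) - Pm (Suc (Suc n)) (fnx n)"
proof -
  let ?N = "Suc (Suc n)"
  let ?L = "1\<^sub>m ?N - Pm ?N (fnx n)"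
  have cL: "?L \<in> carrier_mat ?N ?N" by (rule minus_carrier_mat) auto
  show ?thesis
  proof (rule eq_matI)
    fix i j assume "i < dim_row ?L" "j < dim_col ?L"
    then have i: "i < ?N" and j: "j < ?N" by auto
    have "(\<Sum>l<?N. ?L $$ (i, l)) = (\<Sum>l<?N. (if i = l then 1 else 0) - (if fnx n i = l then 1 else 0))"
      using i by (intro sum.cong) (auto simp: Pm_def)
    also have "\<dots> = 0" using i fnx_lt1[OF i] by (simp add: sum_subtractf sum.delta)
    finally show "(?L * Pim ?N) $$ (i, j) = ?L $$ (i, j)"
      unfolding mult_Pim[OF cL] using i j by simp
  qed (use cL in auto)
qed

lemma Zm_sym: "i < Suc (Suc n) \<Longrightarrow> k < Suc (Suc n) \<Longrightarrow> Zm n $$ (i, k) = Zm n $$ (k, i)"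
proof -
  assume i: "i < Suc (Suc n)" and k: "k < Suc (Suc n)"
  have "Zm n $$ (k, i) = (\<Sum>a<n. \<Sum>b<n. ww a b * gg n ((fnx n ^^ a) k) ((fnx n ^^ b) i))"
    using i k by (simp add: Zm_def)
  also have "\<dots> = (\<Sum>b<n. \<Sum>a<n. ww a b * gg n ((fnx n ^^ a) k) ((fnx n ^^ b) i))"
    by (rule sum.swap)
  also have "\<dots> = (\<Sum>b<n. \<Sum>a<n. ww b a * gg n ((fnx n ^^ b) i) ((fnx n ^^ a) k))"
    by (intro sum.cong refl) (auto simp: ww_sym gg_def)
  also have "\<dots> = Zm n $$ (i, k)" using i k by (simp add: Zm_def)
  finally show ?thesis by simp
qed

lemma PZP_comb:
  fixes Z :: "real mat"
  assumes cZ: "Z \<in> carrier_mat N N" and sym: "\<And>i k. i < N \<Longrightarrow> k < N \<Longrightarrow> Z $$ (i, k) = Z $$ (k, i)"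
    and p: "p < N" and q: "q < N"
  shows "(Pim N * (Z * Pim N)) $$ (p, p) + (Pim N * (Z * Pim N)) $$ (q, q) - 2 * (Pim N * (Z * Pim N)) $$ (p, q)
    = Z $$ (p, p) + Z $$ (q, q) - 2 * Z $$ (p, q)"
proof -
  define R where "R i = (\<Sum>l<N. Z $$ (i, l))" for i
  define K where "K = (\<Sum>l<N. (1 / real N) * R l)"
  have CR: "(\<Sum>l<N. Z $$ (l, k)) = R k" if "k < N" for k
    unfolding R_def using that sym by (intro sum.cong) auto
  have cZP: "Z * Pim N \<in> carrier_mat N N" using cZ by simp
  have ZP: "Z * Pim N = mat N N (\<lambda>(i, j). Z $$ (i, j) - (1 / real N) * R i)"
    unfolding mult_Pim[OF cZ] R_def by simp
  define c where "c = 1 / real N"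
  have ent: "(Pim N * (Z * Pim N)) $$ (i, k) = Z $$ (i, k) - c * R i - c * R k + c * K"
    if i: "i < N" and k: "k < N" for i k
  proof -
    have "(Pim N * (Z * Pim N)) $$ (i, k) = (Z * Pim N) $$ (i, k) - (1 / real N) * (\<Sum>l<N. (Z * Pim N) $$ (l, k))"
      by (simp only: Pim_mult[OF cZP] index_mat[OF i k] prod.case)
    also have "(\<Sum>l<N. (Z * Pim N) $$ (l, k)) = (\<Sum>l<N. Z $$ (l, k) - (1 / real N) * R l)"
      unfolding ZP using k by (intro sum.cong) auto
    also have "\<dots> = R k - K" unfolding K_def using CR[OF k] by (simp add: sum_subtractf)
    finally have X: "(Pim N * (Z * Pim N)) $$ (i, k) = (Z * Pim N) $$ (i, k) - (1 / real N) * (R k - K)" .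
    have zik: "(Z * Pim N) $$ (i, k) = Z $$ (i, k) - (1 / real N) * R i" using i k by (simp add: ZP)
    show ?thesis unfolding X zik by (simp add: c_def algebra_simps diff_divide_distrib)
  qed
  show ?thesis using ent[OF p p] ent[OF q q] ent[OF p q] by linarith
qed

lemma Z_comb: "n \<ge> 1 \<Longrightarrow> Zm n $$ (0, 0) + Zm n $$ (Suc n, Suc n) - 2 * Zm n $$ (0, Suc n) = FF n"
proof -
  assume n: "n \<ge> 1"
  let ?f = "\<lambda>a i. (fnx n ^^ a) i"
  have f0: "?f a 0 = a" if "a < n" for a using that by (simp add: funpow_fnx)
  have fj: "?f a (Suc n) = (if a = 0 then Suc n else n)" for a by (simp add: funpow_fnx)
  have sym: "Zm n $$ (0, Suc n) = Zm n $$ (Suc n, 0)" using Zm_sym[of 0 n "Suc n"] by simp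
  have "Zm n $$ (0, 0) + Zm n $$ (Suc n, Suc n) - Zm n $$ (0, Suc n) - Zm n $$ (Suc n, 0)
     = (\<Sum>a<n. \<Sum>b<n. ww a b * (gg n (?f a 0) (?f b 0) + gg n (?f a (Suc n)) (?f b (Suc n))
          - gg n (?f a 0) (?f b (Suc n)) - gg n (?f a (Suc n)) (?f b 0)))"
    by (simp add: Zm_def sum_subtractf sum.distrib algebra_simps)
  also have "\<dots> = (\<Sum>a<n. \<Sum>b<n. ww a b * GG a b)"
    by (intro sum.cong refl) (auto simp: f0 fj gg_def GG_def)
  finally show ?thesis using sym by (simp add: FF_def)
qed



lemma diff_sol:
  fixes Lb S S0 E :: "real mat"
  assumes c: "Lb \<in> carrier_mat m m" "S \<in> carrier_mat m m" "S0 \<in> carrier_mat m m"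
    and e1: "Lb * S + S * Lb\<^sup>T = E" and e2: "Lb * S0 + S0 * Lb\<^sup>T = E"
  shows "Lb * (S - S0) + (S - S0) * Lb\<^sup>T = 0\<^sub>m m m"
proof -
  have "Lb * (S - S0) = Lb * S - Lb * S0" using c by (subst mult_minus_distrib_mat[of _ m m]) auto
  moreover have "(S - S0) * Lb\<^sup>T = S * Lb\<^sup>T - S0 * Lb\<^sup>T" using c by (subst minus_mult_distrib_mat[of _ m m]) auto
  moreover have "(Lb * S - Lb * S0) + (S * Lb\<^sup>T - S0 * Lb\<^sup>T) = 0\<^sub>m m m"
  proof (rule eq_matI)
    fix i j assume "i < dim_row (0\<^sub>m m m :: real mat)" "j < dim_col (0\<^sub>m m m :: real mat)"
    then have i: "i < m" and j: "j < m" by auto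
    have "(Lb * S + S * Lb\<^sup>T) $$ (i, j) = (Lb * S0 + S0 * Lb\<^sup>T) $$ (i, j)" using e1 e2 by simp
    then have "(Lb * S) $$ (i, j) + (S * Lb\<^sup>T) $$ (i, j) = (Lb * S0) $$ (i, j) + (S0 * Lb\<^sup>T) $$ (i, j)"
      using c i j by simp
    then show "((Lb * S - Lb * S0) + (S * Lb\<^sup>T - S0 * Lb\<^sup>T)) $$ (i, j) = 0\<^sub>m m m $$ (i, j)"
      using c i j by simp
  qed (use c in auto)
  ultimately show ?thesis by simp
qed

lemma minus_zero_eq:
  fixes S S0 :: "real mat"
  assumes "S \<in> carrier_mat m m" "S0 \<in> carrier_mat m m" "S - S0 = 0\<^sub>m m m"
  shows "S = S0"
proof (rule eq_matI)
  fix i j assume "i < dim_row S0" "j < dim_col S0"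
  then have i: "i < m" and j: "j < m" using assms by auto
  have "(S - S0) $$ (i, j) = (0\<^sub>m m m :: real mat) $$ (i, j)" by (simp only: assms(3))
  then have h: "(S - S0) $$ (i, j) = 0" using i j by simp
  have "(S - S0) $$ (i, j) = S $$ (i, j) - S0 $$ (i, j)" using assms(1,2) i j by simp
  then show "S $$ (i, j) = S0 $$ (i, j)" using h by simp
qed (use assms in auto)

theorem lemma6:
  fixes n :: nat
  assumes "n \<ge> 1"
  shows "r_tree n 1 = 2 * (real n - 1) + 2 powr (2 - real n)"
proof -
  note [simp] = mult_carrier_iff transpose_carrier_iff
  note AS = assoc_mult_mat[of _ "Suc n" "Suc n" _ "Suc n" _ "Suc n"] assoc_mult_mat[of _ "Suc n" "Suc n" _ "Suc n" _ "Suc (Suc n)"] assoc_mult_mat[of _ "Suc n" "Suc n" _ "Suc (Suc n)" _ "Suc n"] assoc_mult_mat[of _ "Suc n" "Suc n" _ "Suc (Suc n)" _ "Suc (Suc n)"] assoc_mult_mat[of _ "Suc n" "Suc (Suc n)" _ "Suc n" _ "Suc n"] assoc_mult_mat[of _ "Suc n" "Suc (Suc n)" _ "Suc n" _ "Suc (Suc n)"] assoc_mult_mat[of _ "Suc n" "Suc (Suc n)" _ "Suc (Suc n)" _ "Suc n"] assoc_mult_mat[of _ "Suc n" "Suc (Suc n)" _ "Suc (Suc n)" _ "Suc (Suc n)"] assoc_mult_mat[of _ "Suc (Suc n)" "Suc n" _ "Suc n" _ "Suc n"] assoc_mult_mat[of _ "Suc (Suc n)" "Suc n" _ "Suc n"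 _ "Suc (Suc n)"] assoc_mult_mat[of _ "Suc (Suc n)" "Suc n" _ "Suc (Suc n)" _ "Suc n"] assoc_mult_mat[of _ "Suc (Suc n)" "Suc n" _ "Suc (Suc n)" _ "Suc (Suc n)"] assoc_mult_mat[of _ "Suc (Suc n)" "Suc (Suc n)" _ "Suc n" _ "Suc n"] assoc_mult_mat[of _ "Suc (Suc n)" "Suc (Suc n)" _ "Suc n" _ "Suc (Suc n)"] assoc_mult_mat[of _ "Suc (Suc n)" "Suc (Suc n)" _ "Suc (Suc n)" _ "Suc n"] assoc_mult_mat[of _ "Suc (Suc n)" "Suc (Suc n)" _ "Suc (Suc n)" _ "Suc (Suc n)"]
  have n1: "n \<ge> 1" by fact
  let ?N = "Suc (Suc n)"
  define Lm where "Lm = 1\<^sub>m ?N - Pm ?N (fnx n)"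
  have cL: "Lm \<in> carrier_mat ?N ?N" unfolding Lm_def by (rule minus_carrier_mat) auto
  define Q where "Q = (SOME Q. is_Q_matrix ?N Q)"
  have isQ: "is_Q_matrix ?N Q" unfolding Q_def by (rule someI_ex) (use HQ_is_Q[of ?N] in auto)
  have cQ: "Q \<in> carrier_mat (Suc n) ?N" and QTQ: "Q\<^sup>T * Q = Pim ?N"
    using Q_facts[OF isQ] by auto
  define Lb where "Lb = Q * Lm * Q\<^sup>T"
  define S0 where "S0 = Q * Zm n * Q\<^sup>T"
  have cLb: "Lb \<in> carrier_mat (Suc n) (Suc n)" unfolding Lb_def using cQ cL by simp
  have cS0: "S0 \<in> carrier_mat (Suc n) (Suc n)" unfolding S0_def using cQ by simp
  have hS0: "Lb * S0 + S0 * Lb\<^sup>T = 1\<^sub>m (Suc n)"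
    using sandwich[OF isQ cL Zm_carrier[of n] RRm_carrier[of n] L_Pim[of n, folded Lm_def] Z_eq[OF n1, folded Lm_def]]
      Q_RR[OF isQ] unfolding Lb_def S0_def by simp
  have theS: "(THE S. S \<in> carrier_mat (Suc n) (Suc n) \<and> Lb * S + S * Lb\<^sup>T = 1\<^sub>m (Suc n)) = S0"
  proof (rule the_equality)
    show "S0 \<in> carrier_mat (Suc n) (Suc n) \<and> Lb * S0 + S0 * Lb\<^sup>T = 1\<^sub>m (Suc n)" using cS0 hS0 by simp
  next
    fix S assume S: "S \<in> carrier_mat (Suc n) (Suc n) \<and> Lb * S + S * Lb\<^sup>T = 1\<^sub>m (Suc n)"
    have cS: "S \<in> carrier_mat (Suc n) (Suc n)" and eS: "Lb * S + S * Lb\<^sup>T = 1\<^sub>m (Suc n)" using S by blast+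
    have cD': "S - S0 \<in> carrier_mat (Suc n) (Suc n)" by (rule minus_carrier_mat[OF cS0])
    have cD: "S - S0 \<in> carrier_mat (?N - 1) (?N - 1)" using cD' by (simp only: diff_Suc_1)
    have eqD: "Lb * (S - S0) + (S - S0) * Lb\<^sup>T = 0\<^sub>m (Suc n) (Suc n)"
      by (rule diff_sol[OF cLb cS cS0 eS hS0])
    have cst: "(fnx n ^^ n) i = n" if "i < ?N" for i using fnx_big[OF that] n1 by simp
    have "S - S0 = 0\<^sub>m (?N - 1) (?N - 1)"
    proof (rule Lb_unique[OF isQ _ fnx_lt1 cst cD])
      show "0 < ?N" by simp
      show "Q * (1\<^sub>m ?N - Pm ?N (fnx n)) * Q\<^sup>T * (S - S0) + (S - S0) * (Q * (1\<^sub>m ?N - Pm ?N (fnx n)) * Q\<^sup>T)\<^sup>T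
          = 0\<^sub>m (?N - 1) (?N - 1)"
        using eqD by (simp only: Lb_def Lm_def diff_Suc_1)
    qed
    then have "S - S0 = 0\<^sub>m (Suc n) (Suc n)" by (simp only: diff_Suc_1)
    then show "S = S0" by (rule minus_zero_eq[OF cS cS0])
  qed
  have QSQ: "Q\<^sup>T * S0 * Q = Pim ?N * (Zm n * Pim ?N)"
  proof -
    have "Q\<^sup>T * S0 * Q = (Q\<^sup>T * Q) * (Zm n * (Q\<^sup>T * Q))"
      unfolding S0_def using cQ by (simp add: AS)
    then show ?thesis by (simp only: QTQ)
  qed
  have sym: "\<And>i k. i < ?N \<Longrightarrow> k < ?N \<Longrightarrow> Zm n $$ (i, k) = Zm n $$ (k, i)" by (rule Zm_sym)
  have comb: "(Pim ?N * (Zm n * Pim ?N)) $$ (0, 0) + (Pim ?N * (Zm n * Pim ?N)) $$ (Suc n, Suc n)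
      - 2 * (Pim ?N * (Zm n * Pim ?N)) $$ (0, Suc n) = FF n"
    using PZP_comb[OF Zm_carrier sym, of 0 "Suc n"] Z_comb[OF n1] by simp
  have r: "r_tree n 1 = 2 * FF n"
  proof -
    have "r_tree n 1 = (2 \<cdot>\<^sub>m (Q\<^sup>T * S0 * Q)) $$ (0, 0) + (2 \<cdot>\<^sub>m (Q\<^sup>T * S0 * Q)) $$ (n + 1, n + 1)
        - 2 * (2 \<cdot>\<^sub>m (Q\<^sup>T * S0 * Q)) $$ (0, n + 1)"
      unfolding r_tree_def eff_resistance_def Let_def tree_dims tree_lap Q_def[symmetric] Lm_def[symmetric]
        Lb_def[symmetric] diff_Suc_1 theS ..
    also have "\<dots> = 2 * FF n" unfolding QSQ using comb by simp
    finally show ?thesis .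
  qed
  have pw: "2 powr (2 - real n) = 4 / 2 ^ n"
    by (simp add: powr_diff powr_realpow)
  show ?thesis using r FF_val[OF n1] pw by simp
qed


end
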